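(* Suppose $k,K,A,B,n$ are natural numbers such that $\mathrm{LT}(K,n)\leq A$ and $\mathrm{LCS}_2(K,\mathcal P_k)\leq B$. Then $\mathrm{LT}(k,kn)\leq(2n-1)B+kA$.
   Context: $[k]=\{1,\dots,k\}$. Two subsequences of a word $w$ are twins if they are equal as words and use disjoint sets of positions of $w$; $\mathrm{LT}(w)$ is the maximum length of twins in $w$, and $\mathrm{LT}(k,n)=\min_{w\in[k]^n}\mathrm{LT}(w)$. $\mathcal{P}_k$ is the set of permutations on $k$ letters (words over $[k]$ with each letter exactly once). $\mathrm{LCS}(w,w')$ is the length of a longest common subsequence of $w,w'$; $\mathrm{LCS}_2(K,\mathcal P_k)$ is the minimum, over sets of $K$ distinct permutations in $\mathcal P_k$, of the maximum $\mathrm{LCS}$ of two distinct members. *)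

theory Defs
  imports Main "HOL-Library.Sublist" "HOL-Library.Extended_Nat"
begin

definition words :: "nat \<Rightarrow> nat \<Rightarrow> nat list set" where
  "words k n = {w. length w = n \<and> set w \<subseteq> {1..k}}"

definition twins :: "'a list \<Rightarrow> nat set \<Rightarrow> nat set \<Rightarrow> bool" where
  "twins w I J \<longleftrightarrow> I \<subseteq> {..<length w} \<and> J \<subseteq> {..<length w} \<and> I \<inter> J = {}
     \<and> nths w I = nths w J"

definition LT_word :: "'a list \<Rightarrow> nat" where
  "LT_word w = Max {card I | I J. twins w I J}"

text \<open>LT(k,n) = min over words in [k]^n (infinity if there are no such words).\<close>
definition LT :: "nat \<Rightarrow> nat \<Rightarrow> enat" where
  "LT k n = Inf ((\<lambda>w. enat (LT_word w)) ` words k n)"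

definition perms :: "nat \<Rightarrow> nat list set" where
  "perms k = {p. distinct p \<and> set p = {1..k}}"

definition LCS :: "'a list \<Rightarrow> 'a list \<Rightarrow> nat" where
  "LCS w w' = Max {length u | u. subseq u w \<and> subseq u w'}"

text \<open>LCS_2(K,P_k): min over K-element sets of permutations of the max LCS of two distinct
  members (infinity if no such set exists; the inner maximum over an empty set of pairs is 0).\<close>
definition LCS2 :: "nat \<Rightarrow> nat \<Rightarrow> enat" where
  "LCS2 K k = Inf {Sup {enat (LCS p q) | p q. p \<in> S \<and> q \<in> S \<and> p \<noteq> q}
                   | S. S \<subseteq> perms k \<and> card S = K}"

end

theory Submission
  imports Defs
begin

lemma nths_sorted_list:
  "sorted_wrt (<) is \<Longrightarrow> \<forall>i\<in>set is. i < length xs \<Longrightarrow> nths xs (set is) = map (nth xs) is"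
proof (induction xs arbitrary: "is")
  case Nil
  then show ?case by (cases "is") auto
next
  case (Cons x xs)
  define js where "js = map (\<lambda>i. i - 1) (filter (\<lambda>i. i \<noteq> 0) is)"
  have setjs: "{j. Suc j \<in> set is} = set js"
    unfolding js_def by (force simp: image_iff)
  have "sorted_wrt (<) (filter (\<lambda>i. i \<noteq> 0) is)"
    using Cons.prems(1) by (simp add: sorted_wrt_filter)
  then have sj: "sorted_wrt (<) js"
    unfolding js_def by (auto simp: sorted_wrt_map elim!: sorted_wrt_mono_rel[rotated])
  have lj: "\<forall>i\<in>set js. i < length xs" using Cons.prems(2) unfolding js_def by auto
  have IH: "nths xs (set js) = map (nth xs) js" using Cons.IH[OF sj lj] .
  have m: "map (nth xs) js = map (nth (x#xs)) (filter (\<lambda>i. i \<noteq> 0) is)"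
    unfolding js_def by (auto simp: nth_Cons')
  show ?case
  proof (cases "0 \<in> set is")
    case True
    obtain a r where ar: "is = a # r" using True by (cases "is") auto
    have "a = 0"
    proof (rule ccontr)
      assume "a \<noteq> 0"
      then have "0 \<in> set r" using True ar by auto
      then show False using Cons.prems(1) ar by auto
    qed
    then have r: "is = 0 # r" using ar by simp
    then have "filter (\<lambda>i. i \<noteq> 0) is = r" using Cons.prems(1) by (auto intro!: filter_True)
    then show ?thesis using True IH m setjs r by (simp add: nths_Cons)
  next
    case False
    then have "filter (\<lambda>i. i \<noteq> 0) is = is" by (metis (mono_tags) filter_True)
    then show ?thesis using False IH m setjs by (simp add: nths_Cons)
  qed
qed

lemma nths_sorted_set:
  assumes "I \<subseteq> {..<length xs}"
  shows "nths xs I = map (nth xs) (sorted_list_of_set I)"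
proof -
  have f: "finite I" using assms finite_subset by blast
  show ?thesis using nths_sorted_list[of "sorted_list_of_set I" xs] f assms by auto
qed

lemma subseq_map_nth:
  assumes "sorted_wrt (<) is" "\<forall>i\<in>set is. i < length p"
  shows "subseq (map (nth p) is) p"
  using nths_sorted_list[OF assms] subseq_conv_nths by metis

lemma twins_lists:
  assumes "sorted_wrt (<) xs" "sorted_wrt (<) ys" "set xs \<inter> set ys = {}"
    "\<forall>x\<in>set xs. x < length u" "\<forall>x\<in>set ys. x < length u"
    "map (nth u) xs = map (nth u) ys"
  shows "twins u (set xs) (set ys)" "card (set xs) = length xs"
proof -
  show "twins u (set xs) (set ys)" unfolding twins_def
    using assms nths_sorted_list[of xs u] nths_sorted_list[of ys u] by auto
  show "card (set xs) = length xs" using assms(1)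
    by (simp add: distinct_card strict_sorted_iff)
qed

lemma LT_word_fin: "finite {card I | I J. twins w I J}"
proof -
  have "{card I | I J. twins w I J} \<subseteq> {..length w}"
    unfolding twins_def using card_mono[of "{..<length w}"] by fastforce
  then show ?thesis using finite_subset by blast
qed

lemma LT_word_ge: "twins w I J \<Longrightarrow> card I \<le> LT_word w"
  unfolding LT_word_def using LT_word_fin by (intro Max_ge) auto

lemma LT_word_le: "(\<And>I J. twins w I J \<Longrightarrow> card I \<le> c) \<Longrightarrow> LT_word w \<le> c"
proof -
  assume h: "\<And>I J. twins w I J \<Longrightarrow> card I \<le> c"
  have "twins w {} {}" unfolding twins_def by auto
  then show ?thesis unfolding LT_word_def using LT_word_fin h
    by (subst Max_le_iff) auto
qed

lemma LCS_ge:
  assumes "subseq v p" "subseq v q"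
  shows "length v \<le> LCS p q"
proof -
  have "{length u | u. subseq u p \<and> subseq u q} \<subseteq> {..length p}"
    using list_emb_length by fastforce
  then have "finite {length u | u. subseq u p \<and> subseq u q}" using finite_subset by blast
  then show ?thesis unfolding LCS_def using assms by (intro Max_ge) auto
qed

lemma concat_nth_blocks:
  assumes "\<forall>x\<in>set xss. length x = k" "i < k * length xss"
  shows "concat xss ! i = xss ! (i div k) ! (i mod k)"
  using assms
proof (induction xss arbitrary: i)
  case Nil
  then show ?case by simp
next
  case (Cons x xss)
  have lx: "length x = k" using Cons.prems by simp
  show ?case
  proof (cases "i < k")
    case True
    then show ?thesis using lx by (simp add: nth_append)
  next
    case False
    then have k0: "k > 0" using Cons.prems by (cases k) auto
    have "i - k < k * length xss" using Cons.prems False by simp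
    then have "concat xss ! (i - k) = xss ! ((i - k) div k) ! ((i - k) mod k)"
      using Cons by simp
    moreover have "(i - k) div k = i div k - 1" using False k0
      by (simp add: div_if)
    moreover have "(i - k) mod k = i mod k" using False by (simp add: le_mod_geq)
    moreover have "i div k \<noteq> 0" using False k0 by (simp add: div_eq_0_iff)
    ultimately show ?thesis using False lx by (simp add: nth_append nth_Cons')
  qed
qed

lemma length_concat_blocks:
  "\<forall>x\<in>set xss. length x = k \<Longrightarrow> length (concat xss) = k * length xss"
  by (induction xss) auto

lemma main_bound:
  fixes u :: "nat list" and P :: "nat \<Rightarrow> nat list"
  assumes k0: "k > 0"
    and lu: "length u = n" and su: "set u \<subseteq> {1..K}"
    and Pp: "\<And>i. i \<in> {1..K} \<Longrightarrow> P i \<in> perms k"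
    and PB: "\<And>i j. i \<in> {1..K} \<Longrightarrow> j \<in> {1..K} \<Longrightarrow> i \<noteq> j \<Longrightarrow> LCS (P i) (P j) \<le> B"
    and uA: "\<And>I J. twins u I J \<Longrightarrow> card I \<le> A"
    and tw: "twins (concat (map P u)) I J"
  shows "card I \<le> (2*n-1)*B + k*A"
proof -
  define w where "w = concat (map P u)"
  have lenP: "length (P i) = k" if "i \<in> {1..K}" for i
    using Pp[OF that] unfolding perms_def by (auto dest: distinct_card)
  have distP: "distinct (P i)" if "i \<in> {1..K}" for i
    using Pp[OF that] unfolding perms_def by auto
  have setP: "set (P i) = {1..k}" if "i \<in> {1..K}" for i
    using Pp[OF that] unfolding perms_def by auto
  have uK: "u ! j \<in> {1..K}" if "j < n" for j using su lu that nth_mem by blast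
  have blocks: "\<forall>x\<in>set (map P u). length x = k" using lenP su by auto
  have lw: "length w = k * n" unfolding w_def using length_concat_blocks[OF blocks] lu by simp
  have wnth: "w ! x = P (u ! (x div k)) ! (x mod k)" if "x < k * n" for x
    unfolding w_def using concat_nth_blocks[OF blocks] that lu k0
    by (simp add: less_mult_imp_div_less mult.commute)
  have divn: "x div k < n" if "x < k * n" for x
    using that by (simp add: less_mult_imp_div_less mult.commute)
  have samepos: "x = y" if "x < k*n" "y < k*n" "x div k = y div k" "w ! x = w ! y" for x y
  proof -
    have i: "u ! (x div k) \<in> {1..K}" using uK divn that(1) by blast
    have "P (u ! (x div k)) ! (x mod k) = P (u ! (x div k)) ! (y mod k)"
      using wnth that by auto
    then have "x mod k = y mod k"
      using nth_eq_iff_index_eq[OF distP[OF i]] lenP[OF i] k0 by simp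
    then show ?thesis using that(3) by (metis div_mult_mod_eq)
  qed
  have letter: "w ! x \<in> {1..k}" if "x < k*n" for x
    using wnth[OF that] setP[OF uK[OF divn[OF that]]] lenP[OF uK[OF divn[OF that]]] k0
    by (metis mod_less_divisor nth_mem)
  have I: "I \<subseteq> {..<length w}" and J: "J \<subseteq> {..<length w}" and IJ: "I \<inter> J = {}"
    and nIJ: "nths w I = nths w J" using tw unfolding twins_def w_def by auto
  define xs where "xs = sorted_list_of_set I"
  define ys where "ys = sorted_list_of_set J"
  have fI: "finite I" using I finite_subset by blast
  have fJ: "finite J" using J finite_subset by blast
  have mxy: "map (nth w) xs = map (nth w) ys"
    using nIJ nths_sorted_set[OF I] nths_sorted_set[OF J] unfolding xs_def ys_def by simp
  define m where "m = length xs"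
  have cI: "card I = m" unfolding m_def xs_def by simp
  have lys: "length ys = m" unfolding m_def using mxy by (metis length_map)
  have sx: "sorted_wrt (<) xs" and sy: "sorted_wrt (<) ys" unfolding xs_def ys_def by auto
  have xsI: "xs ! t \<in> I" if "t < m" for t using that fI unfolding m_def xs_def
    by (metis nth_mem set_sorted_list_of_set)
  have ysJ: "ys ! t \<in> J" if "t < m" for t using that fJ lys unfolding ys_def
    by (metis nth_mem set_sorted_list_of_set)
  have xsb: "xs ! t < k*n" if "t < m" for t using xsI[OF that] I lw by auto
  have ysb: "ys ! t < k*n" if "t < m" for t using ysJ[OF that] J lw by auto
  have xy: "w ! (xs ! t) = w ! (ys ! t)" if "t < m" for t
    using mxy that lys unfolding m_def by (metis nth_map)
  have xsm: "xs ! s < xs ! t" if "s < t" "t < m" for s t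
    using sorted_wrt_nth_less[OF sx that(1)] that unfolding m_def by simp
  have ysm: "ys ! s < ys ! t" if "s < t" "t < m" for s t
    using sorted_wrt_nth_less[OF sy that(1)] that lys by simp
  define a where "a t = xs ! t div k" for t
  define b where "b t = ys ! t div k" for t
  have am: "a s \<le> a t" if "s \<le> t" "t < m" for s t
    unfolding a_def using xsm[of s t] that by (cases "s = t") (auto intro: div_le_mono)
  have bm: "b s \<le> b t" if "s \<le> t" "t < m" for s t
    unfolding b_def using ysm[of s t] that by (cases "s = t") (auto intro: div_le_mono)
  define T1 where "T1 = {t. t < m \<and> u ! (a t) = u ! (b t)}"
  define T2 where "T2 = {t. t < m \<and> u ! (a t) \<noteq> u ! (b t)}"
  have mT: "m \<le> card T1 + card T2"
  proof -
    have "{..<m} = T1 \<union> T2" unfolding T1_def T2_def by auto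
    then have "card {..<m} \<le> card T1 + card T2" by (metis card_Un_le)
    then show ?thesis by simp
  qed
  define T1c where "T1c c = {t \<in> T1. w ! (xs ! t) = c}" for c
  have T1c_bound: "card (T1c c) \<le> A" for c
  proof -
    define ts where "ts = sorted_list_of_set (T1c c)"
    have fT: "finite (T1c c)" unfolding T1c_def T1_def by auto
    have sts: "set ts = T1c c" and sts': "sorted_wrt (<) ts" unfolding ts_def using fT by auto
    have tm: "t < m" if "t \<in> T1c c" for t using that unfolding T1c_def T1_def by auto
    have tc: "w ! (xs ! t) = c" if "t \<in> T1c c" for t using that unfolding T1c_def by auto
    have tu: "u ! (a t) = u ! (b t)" if "t \<in> T1c c" for t using that unfolding T1c_def T1_def by auto
    have ainj: "a s < a t" if "s \<in> T1c c" "t \<in> T1c c" "s < t" for s t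
    proof -
      have "a s \<le> a t" using am that tm by auto
      moreover have "a s \<noteq> a t"
      proof
        assume "a s = a t"
        then have "xs ! s = xs ! t"
          using samepos[OF xsb xsb] tm that tc unfolding a_def by metis
        then show False using xsm[of s t] that tm by auto
      qed
      ultimately show ?thesis by simp
    qed
    have binj: "b s < b t" if "s \<in> T1c c" "t \<in> T1c c" "s < t" for s t
    proof -
      have "b s \<le> b t" using bm that tm by auto
      moreover have "b s \<noteq> b t"
      proof
        assume "b s = b t"
        then have "ys ! s = ys ! t"
          using samepos[OF ysb ysb] tm that tc xy unfolding b_def by metis
        then show False using ysm[of s t] that tm by auto
      qed
      ultimately show ?thesis by simp
    qed
    have s1: "sorted_wrt (<) (map a ts)"
      using sts' sts ainj by (auto simp: sorted_wrt_map elim!: sorted_wrt_mono_rel[rotated])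
    have s2: "sorted_wrt (<) (map b ts)"
      using sts' sts binj by (auto simp: sorted_wrt_map elim!: sorted_wrt_mono_rel[rotated])
    have disj: "set (map a ts) \<inter> set (map b ts) = {}"
    proof (rule ccontr)
      assume "set (map a ts) \<inter> set (map b ts) \<noteq> {}"
      then obtain s t where st: "s \<in> T1c c" "t \<in> T1c c" "a s = b t" using sts by auto
      then have "xs ! s = ys ! t"
        using samepos[OF xsb ysb] tm tc xy unfolding a_def b_def by metis
      then show False using xsI ysJ IJ tm st by (metis disjoint_iff)
    qed
    have l1: "\<forall>x\<in>set (map a ts). x < length u" using sts tm xsb divn lu unfolding a_def by auto
    have l2: "\<forall>x\<in>set (map b ts). x < length u" using sts tm ysb divn lu unfolding b_def by auto
    have eq: "map (nth u) (map a ts) = map (nth u) (map b ts)" using sts tu by auto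
    have "card (set (map a ts)) \<le> A" using twins_lists(1)[OF s1 s2 disj l1 l2 eq] uA by blast
    moreover have "card (set (map a ts)) = length ts" using twins_lists(2)[OF s1 s2 disj l1 l2 eq] by simp
    moreover have "length ts = card (T1c c)" unfolding ts_def by simp
    ultimately show ?thesis by simp
  qed
  have cT1: "card T1 \<le> k * A"
  proof -
    have "T1 \<subseteq> (\<Union>c\<in>{1..k}. T1c c)"
      unfolding T1c_def using letter xsb unfolding T1_def by auto
    then have "card T1 \<le> card (\<Union>c\<in>{1..k}. T1c c)"
      by (intro card_mono) (auto simp: T1c_def T1_def)
    also have "\<dots> \<le> (\<Sum>c\<in>{1..k}. card (T1c c))" by (rule card_UN_le) simp
    also have "\<dots> \<le> (\<Sum>c\<in>{1..k}. A)" by (intro sum_mono T1c_bound)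
    also have "\<dots> = k * A" by simp
    finally show ?thesis .
  qed
  define Q where "Q = (\<lambda>t. (a t, b t)) ` T2"
  define G where "G q = {t \<in> T2. (a t, b t) = q}" for q
  have G_bound: "card (G q) \<le> B" if qQ: "q \<in> Q" for q
  proof -
    obtain a0 b0 where q: "q = (a0, b0)" by (cases q)
    obtain t0 where t0: "t0 \<in> T2" "a t0 = a0" "b t0 = b0" using qQ q unfolding Q_def by auto
    have t0m: "t0 < m" and ne: "u ! a0 \<noteq> u ! b0" using t0 unfolding T2_def by auto
    have ia: "u ! a0 \<in> {1..K}" using uK divn xsb t0m t0 unfolding a_def by blast
    have ib: "u ! b0 \<in> {1..K}" using uK divn ysb t0m t0 unfolding b_def by blast
    define ts where "ts = sorted_list_of_set (G q)"
    have fT: "finite (G q)" unfolding G_def T2_def by auto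
    have sts: "set ts = G q" and sts': "sorted_wrt (<) ts" unfolding ts_def using fT by auto
    have tm: "t < m" if "t \<in> G q" for t using that unfolding G_def T2_def by auto
    have ta: "a t = a0" "b t = b0" if "t \<in> G q" for t using that q unfolding G_def by auto
    have wa: "w ! (xs ! t) = P (u ! a0) ! (xs ! t mod k)" if "t \<in> G q" for t
      using wnth[OF xsb[OF tm[OF that]]] ta[OF that] unfolding a_def by simp
    have wb: "w ! (ys ! t) = P (u ! b0) ! (ys ! t mod k)" if "t \<in> G q" for t
      using wnth[OF ysb[OF tm[OF that]]] ta[OF that] unfolding b_def by simp
    have moda: "xs ! s mod k < xs ! t mod k" if "s \<in> G q" "t \<in> G q" "s < t" for s t
    proof -
      have "xs ! s < xs ! t" using xsm that tm by auto
      moreover have "xs ! s div k = xs ! t div k" using ta that unfolding a_def by metis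
      ultimately show ?thesis by (metis div_mult_mod_eq nat_add_left_cancel_less)
    qed
    have modb: "ys ! s mod k < ys ! t mod k" if "s \<in> G q" "t \<in> G q" "s < t" for s t
    proof -
      have "ys ! s < ys ! t" using ysm that tm by auto
      moreover have "ys ! s div k = ys ! t div k" using ta that unfolding b_def by metis
      ultimately show ?thesis by (metis div_mult_mod_eq nat_add_left_cancel_less)
    qed
    define v where "v = map (\<lambda>t. w ! (xs ! t)) ts"
    have va: "v = map (nth (P (u ! a0))) (map (\<lambda>t. xs ! t mod k) ts)"
      unfolding v_def using sts wa by auto
    have vb: "v = map (nth (P (u ! b0))) (map (\<lambda>t. ys ! t mod k) ts)"
      unfolding v_def using sts wb xy tm by auto
    have sa: "sorted_wrt (<) (map (\<lambda>t. xs ! t mod k) ts)"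
      using sts' sts moda by (auto simp: sorted_wrt_map elim!: sorted_wrt_mono_rel[rotated])
    have sb: "sorted_wrt (<) (map (\<lambda>t. ys ! t mod k) ts)"
      using sts' sts modb by (auto simp: sorted_wrt_map elim!: sorted_wrt_mono_rel[rotated])
    have "subseq v (P (u ! a0))"
      unfolding va by (rule subseq_map_nth[OF sa]) (auto simp: lenP[OF ia] k0)
    moreover have "subseq v (P (u ! b0))"
      unfolding vb by (rule subseq_map_nth[OF sb]) (auto simp: lenP[OF ib] k0)
    ultimately have "length v \<le> LCS (P (u ! a0)) (P (u ! b0))" by (rule LCS_ge)
    also have "\<dots> \<le> B" using PB[OF ia ib ne] .
    finally show ?thesis unfolding v_def ts_def by simp
  qed
  have cQ: "card Q \<le> 2*n - 1"
  proof -
    have inj: "inj_on (\<lambda>(x,y). x + y) Q"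
    proof (rule inj_onI)
      fix p q assume pq: "p \<in> Q" "q \<in> Q" "(\<lambda>(x, y). x + y) p = (\<lambda>(x, y). x + y) q"
      obtain s t where st: "s \<in> T2" "t \<in> T2" "p = (a s, b s)" "q = (a t, b t)"
        using pq(1,2) unfolding Q_def by auto
      have sm: "s < m" "t < m" using st unfolding T2_def by auto
      show "p = q"
      proof (cases "s \<le> t")
        case True
        then show ?thesis using am[of s t] bm[of s t] sm st pq(3) by auto
      next
        case False
        then show ?thesis using am[of t s] bm[of t s] sm st pq(3) by auto
      qed
    qed
    have "(\<lambda>(x,y). x + y) ` Q \<subseteq> {..<2*n-1}"
    proof
      fix z assume "z \<in> (\<lambda>(x,y). x + y) ` Q"
      then obtain t where "t \<in> T2" "z = a t + b t" unfolding Q_def by auto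
      moreover have "a t < n" "b t < n" using calculation(1) divn xsb ysb
        unfolding T2_def a_def b_def by auto
      ultimately show "z \<in> {..<2*n-1}" by auto
    qed
    then have "card ((\<lambda>(x,y). x + y) ` Q) \<le> 2*n-1" by (metis card_lessThan card_mono finite_lessThan)
    then show ?thesis using card_image[OF inj] by simp
  qed
  have cT2: "card T2 \<le> (2*n-1) * B"
  proof -
    have fQ: "finite Q" unfolding Q_def T2_def by auto
    have "T2 \<subseteq> (\<Union>q\<in>Q. G q)" unfolding G_def Q_def by auto
    then have "card T2 \<le> card (\<Union>q\<in>Q. G q)"
      by (intro card_mono) (auto simp: G_def T2_def fQ)
    also have "\<dots> \<le> (\<Sum>q\<in>Q. card (G q))" by (rule card_UN_le[OF fQ])
    also have "\<dots> \<le> (\<Sum>q\<in>Q. B)" by (intro sum_mono G_bound)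
    also have "\<dots> = card Q * B" by simp
    also have "\<dots> \<le> (2*n-1) * B" using cQ by simp
    finally show ?thesis .
  qed
  show ?thesis using cI mT cT1 cT2 by simp
qed

lemma enat_Inf_in: "X \<noteq> {} \<Longrightarrow> Inf X \<in> (X :: enat set)"
  unfolding Inf_enat_def by (auto intro: LeastI)

theorem lemma21:
  fixes k K A B n :: nat
  assumes "LT K n \<le> enat A"
    and "LCS2 K k \<le> enat B"
  shows "LT k (k * n) \<le> enat ((2 * n - 1) * B + k * A)"
proof -
  have ne1: "(\<lambda>w. enat (LT_word w)) ` words K n \<noteq> {}"
    using assms(1) unfolding LT_def by (auto simp: top_enat_def)
  obtain u where u: "u \<in> words K n" "enat (LT_word u) \<le> enat A"
    using enat_Inf_in[OF ne1] assms(1) unfolding LT_def by auto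
  have lu: "length u = n" and su: "set u \<subseteq> {1..K}" using u(1) unfolding words_def by auto
  have uA: "card I \<le> A" if "twins u I J" for I J
    using LT_word_ge[OF that] u(2) by simp
  let ?X = "{Sup {enat (LCS p q) | p q. p \<in> S \<and> q \<in> S \<and> p \<noteq> q}
                   | S. S \<subseteq> perms k \<and> card S = K}"
  have ne2: "?X \<noteq> {}"
  proof
    assume e: "?X = {}"
    have "LCS2 K k = \<infinity>" unfolding LCS2_def by (simp only: e Inf_empty top_enat_def)
    then show False using assms(2) by simp
  qed
  obtain S where S: "S \<subseteq> perms k" "card S = K"
    "Sup {enat (LCS p q) | p q. p \<in> S \<and> q \<in> S \<and> p \<noteq> q} \<le> enat B"
    using enat_Inf_in[OF ne2] assms(2) unfolding LCS2_def by auto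
  have fp: "finite (perms k)"
  proof -
    have "perms k \<subseteq> {xs. set xs \<subseteq> {1..k} \<and> length xs = k}"
      unfolding perms_def by (auto dest: distinct_card)
    then show ?thesis using finite_lists_length_eq[of "{1..k}" k] finite_subset by blast
  qed
  have fS: "finite S" using S(1) fp finite_subset by blast
  obtain h where h: "bij_betw h {1..K} S" using ex_bij_betw_nat_finite_1[OF fS] S(2) by auto
  have Pp: "h i \<in> perms k" if "i \<in> {1..K}" for i using h S(1) that bij_betwE by blast
  have PB: "LCS (h i) (h j) \<le> B" if "i \<in> {1..K}" "j \<in> {1..K}" "i \<noteq> j" for i j
  proof -
    have "h i \<noteq> h j" using h that bij_betw_imp_inj_on inj_on_def by metis
    moreover have "h i \<in> S" "h j \<in> S" using h that bij_betwE by blast+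
    ultimately have "enat (LCS (h i) (h j)) \<le> Sup {enat (LCS p q) | p q. p \<in> S \<and> q \<in> S \<and> p \<noteq> q}"
      by (intro Sup_upper) blast
    then have "enat (LCS (h i) (h j)) \<le> enat B" using S(3) by (rule order_trans)
    then show ?thesis by simp
  qed
  define w where "w = concat (map h u)"
  have lh: "length (h i) = k" if "i \<in> {1..K}" for i
    using Pp[OF that] unfolding perms_def by (metis (mono_tags) card_atLeastAtMost diff_Suc_1 distinct_card mem_Collect_eq)
  have blocks: "\<forall>x\<in>set (map h u). length x = k"
    using lh su by auto
  have "w \<in> words k (k * n)"
  proof -
    have "length w = k * n" unfolding w_def using length_concat_blocks[OF blocks] lu by simp
    moreover have "set w \<subseteq> {1..k}" unfolding w_def using Pp su unfolding perms_def by auto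
    ultimately show ?thesis unfolding words_def by auto
  qed
  then have "LT k (k * n) \<le> enat (LT_word w)" unfolding LT_def by (intro Inf_lower) auto
  also have "LT_word w \<le> (2 * n - 1) * B + k * A"
  proof (rule LT_word_le)
    fix I J assume tw: "twins w I J"
    show "card I \<le> (2 * n - 1) * B + k * A"
    proof (cases "k = 0")
      case True
      then have "length w = 0" unfolding w_def using length_concat_blocks[OF blocks] by simp
      then have "I = {}" using tw unfolding twins_def by auto
      then show ?thesis by simp
    next
      case False
      then show ?thesis using main_bound[of k u n K h B A I J] lu su Pp PB uA tw
        unfolding w_def by auto
    qed
  qed
  finally show ?thesis by simp
qed

end
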